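(* Fix $\gamma\in(0,\pi/2)$ and set $v^2:=\dfrac{2\cos^2\gamma}{1+\cos^2\gamma}$ with $v>0$. Let $\mathcal U\subset\mathbb R^2$ be open, and let $T(\tau,\sigma)=\tau$ and $Y:\mathcal U\to\mathbb R^{D-1}$ be $C^2$ with $Y'^2>0$. Assume that on $\mathcal U$ $$\dot Y^2=\sin^2\gamma,\qquad Y'^2=\cos^2\gamma,\qquad (\dot Y,Y')=0 .$$ Then $(T,Y)$ satisfies the Euler–Lagrange equations of $L_{ns}$ on $\mathcal U$ if and only if $$v^2\,\ddot Y_i-Y''_i=0\qquad\text{for all } i=1,\dots,D-1 .$$
   Context: Coordinates on $\mathcal U$ are $(\tau,\sigma)$; dot and prime denote $\partial_\tau$, $\partial_\sigma$. For vectors in $\mathbb R^{D-1}$, $(\cdot,\cdot)$ is the Euclidean scalar product and $V^2=(V,V)$. Fix a constant $\rho>0$. Define $$A^2:=\dot T^2Y'^2+T'^2\dot Y^2-2\dot TT'(\dot Y,Y'),\qquad N:=\dot Y^2Y'^2-(\dot Y,Y')^2,$$ and the nonrelativistic string Lagrangian density (with $c=1$), regarded as a function of $(\dot T,T',\dot Y,Y')$ on the region $A^2>0$: $$L_{ns}:=\rho\Big[\frac{N}{2\sqrt{A^2}}-\sqrt{A^2}\Big].$$ The Euler–Lagrange equations of $L_{ns}$ are $$\partial_\tau\frac{\partial L_{ns}}{\partial\dot T}+\partial_\sigma\frac{\partial L_{ns}}{\partial T'}=0,\qquad \partial_\tau\frac{\partial L_{ns}}{\partial\dot Y^i}+\partial_\sigma\frac{\partial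 L_{ns}}{\partial Y'^i}=0\quad(i=1,\dots,D-1),$$ where the partial derivatives of $L_{ns}$ are evaluated along $(T,Y)$. *)

theory Defs
  imports "HOL-Analysis.Analysis"
begin

text \<open>Coordinates on the worldsheet are pairs (tau, sigma). Partial derivatives
  with respect to tau (dot) and sigma (prime).\<close>

definition ptau :: "(real \<times> real \<Rightarrow> 'b::real_normed_vector) \<Rightarrow> real \<times> real \<Rightarrow> 'b" where
  "ptau f x = vector_derivative (\<lambda>t. f (t, snd x)) (at (fst x))"

definition psig :: "(real \<times> real \<Rightarrow> 'b::real_normed_vector) \<Rightarrow> real \<times> real \<Rightarrow> 'b" where
  "psig f x = vector_derivative (\<lambda>s. f (fst x, s)) (at (snd x))"

definition C2_on :: "(real \<times> real) set \<Rightarrow> (real \<times> real \<Rightarrow> 'b::real_normed_vector) \<Rightarrow> bool" where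
  "C2_on U f \<longleftrightarrow>
     (\<exists>(f1 :: real \<times> real \<Rightarrow> (real \<times> real) \<Rightarrow>\<^sub>L 'b)
        (f2 :: real \<times> real \<Rightarrow> (real \<times> real) \<Rightarrow>\<^sub>L ((real \<times> real) \<Rightarrow>\<^sub>L 'b)).
        (\<forall>x\<in>U. (f has_derivative blinfun_apply (f1 x)) (at x)) \<and>
        (\<forall>x\<in>U. (f1 has_derivative blinfun_apply (f2 x)) (at x)) \<and>
        continuous_on U f2)"

text \<open>The quantities A^2, N and the nonrelativistic string Lagrangian density,
  as functions of (Tdot, T', Ydot, Y').\<close>

definition A2 :: "real \<Rightarrow> real \<Rightarrow> real^'n \<Rightarrow> real^'n \<Rightarrow> real" where
  "A2 a b p q = a\<^sup>2 * (q \<bullet> q) + b\<^sup>2 * (p \<bullet> p) - 2 * a * b * (p \<bullet> q)"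

definition Nq :: "real^'n \<Rightarrow> real^'n \<Rightarrow> real" where
  "Nq p q = (p \<bullet> p) * (q \<bullet> q) - (p \<bullet> q)\<^sup>2"

definition Lns :: "real \<Rightarrow> real \<Rightarrow> real \<Rightarrow> real^'n \<Rightarrow> real^'n \<Rightarrow> real" where
  "Lns \<rho> a b p q = \<rho> * (Nq p q / (2 * sqrt (A2 a b p q)) - sqrt (A2 a b p q))"

definition dL_dTdot :: "real \<Rightarrow> real \<Rightarrow> real \<Rightarrow> real^'n \<Rightarrow> real^'n \<Rightarrow> real" where
  "dL_dTdot \<rho> a b p q = deriv (\<lambda>a'. Lns \<rho> a' b p q) a"

definition dL_dTprime :: "real \<Rightarrow> real \<Rightarrow> real \<Rightarrow> real^'n \<Rightarrow> real^'n \<Rightarrow> real" where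
  "dL_dTprime \<rho> a b p q = deriv (\<lambda>b'. Lns \<rho> a b' p q) b"

definition dL_dYdot :: "real \<Rightarrow> 'n \<Rightarrow> real \<Rightarrow> real \<Rightarrow> real^'n \<Rightarrow> real^'n \<Rightarrow> real" where
  "dL_dYdot \<rho> i a b p q = deriv (\<lambda>s. Lns \<rho> a b (p + s *\<^sub>R axis i 1) q) 0"

definition dL_dYprime :: "real \<Rightarrow> 'n \<Rightarrow> real \<Rightarrow> real \<Rightarrow> real^'n \<Rightarrow> real^'n \<Rightarrow> real" where
  "dL_dYprime \<rho> i a b p q = deriv (\<lambda>s. Lns \<rho> a b p (q + s *\<^sub>R axis i 1)) 0"

definition EL_ns :: "real \<Rightarrow> (real \<times> real) set \<Rightarrow> (real \<times> real \<Rightarrow> real) \<Rightarrow> (real \<times> real \<Rightarrow> real^'n) \<Rightarrow> bool" where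
  "EL_ns \<rho> U T Y \<longleftrightarrow>
     (\<forall>x\<in>U.
        ptau (\<lambda>y. dL_dTdot \<rho> (ptau T y) (psig T y) (ptau Y y) (psig Y y)) x
      + psig (\<lambda>y. dL_dTprime \<rho> (ptau T y) (psig T y) (ptau Y y) (psig Y y)) x = 0
      \<and> (\<forall>i. ptau (\<lambda>y. dL_dYdot \<rho> i (ptau T y) (psig T y) (ptau Y y) (psig Y y)) x
            + psig (\<lambda>y. dL_dYprime \<rho> i (ptau T y) (psig T y) (ptau Y y) (psig Y y)) x = 0))"

end

theory Submission
  imports Defs "HOL-Analysis.Analysis"
begin


lemma ptau_has:
  fixes F :: "real \<times> real \<Rightarrow> 'b::real_normed_vector"
  assumes "(F has_derivative F') (at y)"
  shows "ptau F y = F' (1,0)"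
proof -
  have l: "linear F'" using assms has_derivative_linear by blast
  have h1: "((\<lambda>t. (t, snd y)) has_derivative (\<lambda>t. (t,0))) (at (fst y))"
    by (auto intro!: derivative_eq_intros)
  have "F (fst y, snd y) = F y" by simp
  have "((\<lambda>t. F (t, snd y)) has_derivative (\<lambda>t. F' (t,0))) (at (fst y))"
    using has_derivative_compose[OF h1, of F F'] assms by simp
  moreover have "(\<lambda>t. F' (t,0)) = (\<lambda>t. t *\<^sub>R F' (1,0))"
  proof (rule ext)
    fix t :: real
    have "F' (t,0) = F' (t *\<^sub>R (1,0))" by simp
    also have "\<dots> = t *\<^sub>R F' (1,0)" by (rule real_vector.linear_scale[OF l])
    finally show "F' (t,0) = t *\<^sub>R F' (1,0)" .
  qed
  ultimately have "((\<lambda>t. F (t, snd y)) has_vector_derivative F' (1,0)) (at (fst y))"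
    by (simp add: has_vector_derivative_def)
  then show ?thesis unfolding ptau_def by (rule vector_derivative_at)
qed

lemma psig_has:
  fixes F :: "real \<times> real \<Rightarrow> 'b::real_normed_vector"
  assumes "(F has_derivative F') (at y)"
  shows "psig F y = F' (0,1)"
proof -
  have l: "linear F'" using assms has_derivative_linear by blast
  have h1: "((\<lambda>t. (fst y, t)) has_derivative (\<lambda>t. (0,t))) (at (snd y))"
    by (auto intro!: derivative_eq_intros)
  have "((\<lambda>t. F (fst y, t)) has_derivative (\<lambda>t. F' (0,t))) (at (snd y))"
    using has_derivative_compose[OF h1, of F F'] assms by simp
  moreover have "(\<lambda>t. F' (0,t)) = (\<lambda>t. t *\<^sub>R F' (0,1))"
  proof (rule ext)
    fix t :: real
    have "F' (0,t) = F' (t *\<^sub>R (0,1))" by simp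
    also have "\<dots> = t *\<^sub>R F' (0,1)" by (rule real_vector.linear_scale[OF l])
    finally show "F' (0,t) = t *\<^sub>R F' (0,1)" .
  qed
  ultimately have "((\<lambda>t. F (fst y, t)) has_vector_derivative F' (0,1)) (at (snd y))"
    by (simp add: has_vector_derivative_def)
  then show ?thesis unfolding psig_def by (rule vector_derivative_at)
qed

lemma ptau_cong:
  assumes "open U" "x \<in> U" "\<forall>y\<in>U. f y = g y"
  shows "ptau f x = ptau g x"
proof -
  have "open ((\<lambda>t. (t, snd x)) -` U)"
    by (rule continuous_open_vimage[OF assms(1)]) (intro continuous_intros)
  then have "eventually (\<lambda>t. t \<in> (\<lambda>t. (t, snd x)) -` U) (nhds (fst x))"
    by (rule eventually_nhds_in_open) (use assms(2) in simp)
  then have "eventually (\<lambda>t. t \<in> UNIV \<longrightarrow> f (t, snd x) = g (t, snd x)) (nhds (fst x))"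
    by eventually_elim (use assms in auto)
  then show ?thesis unfolding ptau_def
    using vector_derivative_cong_eq[where A=UNIV and B=UNIV and f="\<lambda>t. f (t, snd x)" and g="\<lambda>t. g (t, snd x)" and x="fst x" and y="fst x"]
    by simp
qed

lemma psig_cong:
  assumes "open U" "x \<in> U" "\<forall>y\<in>U. f y = g y"
  shows "psig f x = psig g x"
proof -
  have "open ((\<lambda>t. (fst x, t)) -` U)"
    by (rule continuous_open_vimage[OF assms(1)]) (intro continuous_intros)
  then have "eventually (\<lambda>t. t \<in> (\<lambda>t. (fst x, t)) -` U) (nhds (snd x))"
    by (rule eventually_nhds_in_open) (use assms(2) in simp)
  then have "eventually (\<lambda>t. t \<in> UNIV \<longrightarrow> f (fst x, t) = g (fst x, t)) (nhds (snd x))"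
    by eventually_elim (use assms in auto)
  then show ?thesis unfolding psig_def
    using vector_derivative_cong_eq[where A=UNIV and B=UNIV and f="\<lambda>t. f (fst x, t)" and g="\<lambda>t. g (fst x, t)" and x="snd x" and y="snd x"]
    by simp
qed



lemma dYdot_val:
  fixes p q :: "real^'n"
  assumes "q \<bullet> q = Q" "p \<bullet> p = P" "p \<bullet> q = 0" "Q > 0"
  shows "dL_dYdot \<rho> i 1 0 p q = \<rho> * (p$i) * sqrt Q"
proof -
  have fn: "(\<lambda>s. Lns \<rho> 1 0 (p + s *\<^sub>R axis i 1) q) =
     (\<lambda>s. \<rho> * (((P + 2 * s * p$i + s\<^sup>2)*Q - (s * q$i)\<^sup>2)/(2 * sqrt Q) - sqrt Q))"
    using assms by (auto simp: Lns_def Nq_def A2_def inner_add_left inner_add_right inner_axis inner_axis'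
         inner_axis_axis inner_commute power2_eq_square algebra_simps intro!: ext)
  have "((\<lambda>s. \<rho> * (((P + 2 * s * p$i + s\<^sup>2)*Q - (s * q$i)\<^sup>2)/(2 * sqrt Q) - sqrt Q)) has_real_derivative
        \<rho> * (p$i) * sqrt Q) (at 0)"
    using assms by (auto intro!: derivative_eq_intros simp: field_simps)
  then show ?thesis unfolding dL_dYdot_def fn by (rule DERIV_imp_deriv)
qed


lemma dYprime_val:
  fixes p q :: "real^'n"
  assumes "q \<bullet> q = Q" "p \<bullet> p = P" "p \<bullet> q = 0" "Q > 0"
  shows "dL_dYprime \<rho> i 1 0 p q = \<rho> * (q$i) * (P/2 - 1) / sqrt Q"
proof -
  have fn: "(\<lambda>s. Lns \<rho> 1 0 p (q + s *\<^sub>R axis i 1)) =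
     (\<lambda>s. \<rho> * ((P * (Q + 2 * s * q$i + s\<^sup>2) - (s * p$i)\<^sup>2)/(2 * sqrt (Q + 2 * s * q$i + s\<^sup>2))
          - sqrt (Q + 2 * s * q$i + s\<^sup>2)))"
    using assms by (auto simp: Lns_def Nq_def A2_def inner_add_left inner_add_right inner_axis inner_axis'
         inner_axis_axis inner_commute power2_eq_square algebra_simps intro!: ext)
  have "((\<lambda>s. \<rho> * ((P * (Q + 2 * s * q$i + s\<^sup>2) - (s * p$i)\<^sup>2)/(2 * sqrt (Q + 2 * s * q$i + s\<^sup>2))
          - sqrt (Q + 2 * s * q$i + s\<^sup>2))) has_real_derivative
        \<rho> * (q$i) * (P/2 - 1) / sqrt Q) (at 0)"
    using assms(4) by (auto intro!: derivative_eq_intros simp: field_simps power2_eq_square[symmetric])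
  then show ?thesis unfolding dL_dYprime_def fn by (rule DERIV_imp_deriv)
qed

lemma dTdot_inner:
  "dL_dTdot \<rho> a b p q = deriv (\<lambda>a'. \<rho> * (((p \<bullet> p) * (q \<bullet> q) - (p \<bullet> q)\<^sup>2) /
      (2 * sqrt (a'\<^sup>2 * (q \<bullet> q) + b\<^sup>2 * (p \<bullet> p) - 2 * a' * b * (p \<bullet> q)))
      - sqrt (a'\<^sup>2 * (q \<bullet> q) + b\<^sup>2 * (p \<bullet> p) - 2 * a' * b * (p \<bullet> q)))) a"
  unfolding dL_dTdot_def Lns_def Nq_def A2_def ..

lemma dTprime_inner:
  "dL_dTprime \<rho> a b p q = deriv (\<lambda>b'. \<rho> * (((p \<bullet> p) * (q \<bullet> q) - (p \<bullet> q)\<^sup>2) /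
      (2 * sqrt (a\<^sup>2 * (q \<bullet> q) + b'\<^sup>2 * (p \<bullet> p) - 2 * a * b' * (p \<bullet> q)))
      - sqrt (a\<^sup>2 * (q \<bullet> q) + b'\<^sup>2 * (p \<bullet> p) - 2 * a * b' * (p \<bullet> q)))) b"
  unfolding dL_dTprime_def Lns_def Nq_def A2_def ..


lemma ptau_comp:
  fixes F :: "real \<times> real \<Rightarrow> real^'n"
  assumes "(F has_derivative F') (at y)"
  shows "ptau (\<lambda>y. k * F y $ i) y = k * F' (1,0) $ i"
proof -
  have "((\<lambda>y. k * F y $ i) has_derivative (\<lambda>h. k * F' h $ i)) (at y)"
    using bounded_linear.has_derivative[OF bounded_linear_vec_nth[of i] assms]
    by (auto intro!: derivative_eq_intros)
  then show ?thesis by (rule ptau_has)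
qed

lemma psig_comp:
  fixes F :: "real \<times> real \<Rightarrow> real^'n"
  assumes "(F has_derivative F') (at y)"
  shows "psig (\<lambda>y. k * F y $ i) y = k * F' (0,1) $ i"
proof -
  have "((\<lambda>y. k * F y $ i) has_derivative (\<lambda>h. k * F' h $ i)) (at y)"
    using bounded_linear.has_derivative[OF bounded_linear_vec_nth[of i] assms]
    by (auto intro!: derivative_eq_intros)
  then show ?thesis by (rule psig_has)
qed

lemma ptau_const: "ptau (\<lambda>y. K) x = (0::'b::real_normed_vector)"
proof -
  have "((\<lambda>y. K) has_derivative (\<lambda>h. 0)) (at x)" by simp
  from ptau_has[OF this] show ?thesis by simp
qed

lemma psig_const: "psig (\<lambda>y. K) x = (0::'b::real_normed_vector)"
proof -
  have "((\<lambda>y. K) has_derivative (\<lambda>h. 0)) (at x)" by simp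
  from psig_has[OF this] show ?thesis by simp
qed

lemma ptau_fst: "ptau fst y = 1"
  using ptau_has[OF bounded_linear_imp_has_derivative[OF bounded_linear_fst]] by simp

lemma psig_fst: "psig fst y = 0"
  using psig_has[OF bounded_linear_imp_has_derivative[OF bounded_linear_fst]] by simp

theorem mainTheorem5:
  fixes \<rho> \<gamma> :: real and U :: "(real \<times> real) set" and Y :: "real \<times> real \<Rightarrow> real^'n"
  assumes "\<rho> > 0"
    and "0 < \<gamma>" and "\<gamma> < pi / 2"
    and "open U"
    and "C2_on U Y"
    and "\<forall>x\<in>U. psig Y x \<bullet> psig Y x > 0"
    and "\<forall>x\<in>U. ptau Y x \<bullet> ptau Y x = (sin \<gamma>)\<^sup>2"
    and "\<forall>x\<in>U. psig Y x \<bullet> psig Y x = (cos \<gamma>)\<^sup>2"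
    and "\<forall>x\<in>U. ptau Y x \<bullet> psig Y x = 0"
  shows "EL_ns \<rho> U (\<lambda>x. fst x) Y \<longleftrightarrow>
         (\<forall>x\<in>U. \<forall>i. (2 * (cos \<gamma>)\<^sup>2 / (1 + (cos \<gamma>)\<^sup>2)) * (ptau (ptau Y) x $ i)
                       - psig (psig Y) x $ i = 0)"
proof -
  define c where "c = cos \<gamma>"
  define sn where "sn = sin \<gamma>"
  have cpos: "c > 0" unfolding c_def using assms(2,3) by (intro cos_gt_zero) auto
  have sqc: "sqrt (c\<^sup>2) = c" using cpos by simp
  have sn2: "sn\<^sup>2 = 1 - c\<^sup>2" unfolding sn_def c_def by (simp add: sin_squared_eq)
  obtain f1 :: "real \<times> real \<Rightarrow> (real \<times> real) \<Rightarrow>\<^sub>L (real^'n)"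
     and f2 :: "real \<times> real \<Rightarrow> (real \<times> real) \<Rightarrow>\<^sub>L ((real \<times> real) \<Rightarrow>\<^sub>L (real^'n))"
    where f1: "\<forall>x\<in>U. (Y has_derivative blinfun_apply (f1 x)) (at x)"
      and f2: "\<forall>x\<in>U. (f1 has_derivative blinfun_apply (f2 x)) (at x)"
    using assms(5) unfolding C2_on_def by blast
  define D1 where "D1 y = blinfun_apply (f1 y) (1,0)" for y
  define D2 where "D2 y = blinfun_apply (f1 y) (0,1)" for y
  have pY: "\<forall>y\<in>U. ptau Y y = D1 y" using f1 ptau_has unfolding D1_def by blast
  have sY: "\<forall>y\<in>U. psig Y y = D2 y" using f1 psig_has unfolding D2_def by blast
  have dD1: "(D1 has_derivative (\<lambda>h. blinfun_apply (blinfun_apply (f2 x) h) (1,0))) (at x)"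
    if "x \<in> U" for x
    unfolding D1_def
    using bounded_bilinear.FDERIV[OF bounded_bilinear_blinfun_apply, OF f2[rule_format, OF that]
      has_derivative_const[of "(1::real,0::real)"]] by simp
  have dD2: "(D2 has_derivative (\<lambda>h. blinfun_apply (blinfun_apply (f2 x) h) (0,1))) (at x)"
    if "x \<in> U" for x
    unfolding D2_def
    using bounded_bilinear.FDERIV[OF bounded_bilinear_blinfun_apply, OF f2[rule_format, OF that]
      has_derivative_const[of "(0::real,1::real)"]] by simp
  define A where "A x = blinfun_apply (blinfun_apply (f2 x) (1,0)) (1,0)" for x
  define B where "B x = blinfun_apply (blinfun_apply (f2 x) (0,1)) (0,1)" for x
  define \<kappa> where "\<kappa> = \<rho> * (sn\<^sup>2/2 - 1) / c"
  have ppY: "ptau (ptau Y) x = A x" if "x \<in> U" for x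
  proof -
    have "ptau (ptau Y) x = ptau D1 x" using ptau_cong[OF assms(4) that] pY by blast
    also have "\<dots> = A x" unfolding A_def using ptau_has[OF dD1[OF that]] .
    finally show ?thesis .
  qed
  have ssY: "psig (psig Y) x = B x" if "x \<in> U" for x
  proof -
    have "psig (psig Y) x = psig D2 x" using psig_cong[OF assms(4) that] sY by blast
    also have "\<dots> = B x" unfolding B_def using psig_has[OF dD2[OF that]] .
    finally show ?thesis .
  qed
  define K1 where "K1 = deriv (\<lambda>a'. \<rho> * ((sn\<^sup>2 * c\<^sup>2 - 0\<^sup>2) /
      (2 * sqrt (a'\<^sup>2 * c\<^sup>2 + 0\<^sup>2 * sn\<^sup>2 - 2 * a' * 0 * 0))
      - sqrt (a'\<^sup>2 * c\<^sup>2 + 0\<^sup>2 * sn\<^sup>2 - 2 * a' * 0 * 0))) 1"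
  define K2 where "K2 = deriv (\<lambda>b'. \<rho> * ((sn\<^sup>2 * c\<^sup>2 - 0\<^sup>2) /
      (2 * sqrt (1\<^sup>2 * c\<^sup>2 + b'\<^sup>2 * sn\<^sup>2 - 2 * 1 * b' * 0))
      - sqrt (1\<^sup>2 * c\<^sup>2 + b'\<^sup>2 * sn\<^sup>2 - 2 * 1 * b' * 0))) 0"
  have e1: "\<forall>y\<in>U. dL_dTdot \<rho> (ptau fst y) (psig fst y) (ptau Y y) (psig Y y) = K1"
    using assms(7,8,9) unfolding K1_def dTdot_inner ptau_fst psig_fst sn_def c_def
    by (simp add: inner_commute)
  have e2: "\<forall>y\<in>U. dL_dTprime \<rho> (ptau fst y) (psig fst y) (ptau Y y) (psig Y y) = K2"
    using assms(7,8,9) unfolding K2_def dTprime_inner ptau_fst psig_fst sn_def c_def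
    by (simp add: inner_commute)
  have e3: "\<forall>y\<in>U. dL_dYdot \<rho> i (ptau fst y) (psig fst y) (ptau Y y) (psig Y y) = (\<rho> * c) * D1 y $ i"
    for i
  proof
    fix y assume y: "y \<in> U"
    have "dL_dYdot \<rho> i (ptau fst y) (psig fst y) (ptau Y y) (psig Y y) = \<rho> * (ptau Y y $ i) * sqrt (c\<^sup>2)"
      unfolding ptau_fst psig_fst
      by (rule dYdot_val) (use assms(7,8,9) y cpos in \<open>auto simp: c_def\<close>)
    then show "dL_dYdot \<rho> i (ptau fst y) (psig fst y) (ptau Y y) (psig Y y) = (\<rho> * c) * D1 y $ i"
      using pY y sqc by simp
  qed
  have e4: "\<forall>y\<in>U. dL_dYprime \<rho> i (ptau fst y) (psig fst y) (ptau Y y) (psig Y y) = \<kappa> * D2 y $ i"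
    for i
  proof
    fix y assume y: "y \<in> U"
    have "dL_dYprime \<rho> i (ptau fst y) (psig fst y) (ptau Y y) (psig Y y) = \<rho> * (psig Y y $ i) * (sn\<^sup>2/2 - 1) / sqrt (c\<^sup>2)"
      unfolding ptau_fst psig_fst
      by (rule dYprime_val) (use assms(7,8,9) y cpos in \<open>auto simp: c_def sn_def\<close>)
    then show "dL_dYprime \<rho> i (ptau fst y) (psig fst y) (ptau Y y) (psig Y y) = \<kappa> * D2 y $ i"
      using sY y sqc by (simp add: \<kappa>_def)
  qed
  have EL: "EL_ns \<rho> U (\<lambda>x. fst x) Y \<longleftrightarrow> (\<forall>x\<in>U. \<forall>i. (\<rho> * c) * A x $ i + \<kappa> * B x $ i = 0)"
  proof -
    have "ptau (\<lambda>y. dL_dTdot \<rho> (ptau fst y) (psig fst y) (ptau Y y) (psig Y y)) x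
      + psig (\<lambda>y. dL_dTprime \<rho> (ptau fst y) (psig fst y) (ptau Y y) (psig Y y)) x = 0"
      if "x \<in> U" for x
      using ptau_cong[OF assms(4) that e1] psig_cong[OF assms(4) that e2] ptau_const[of K1 x] psig_const[of K2 x]
      by simp
    moreover have "ptau (\<lambda>y. dL_dYdot \<rho> i (ptau fst y) (psig fst y) (ptau Y y) (psig Y y)) x
            + psig (\<lambda>y. dL_dYprime \<rho> i (ptau fst y) (psig fst y) (ptau Y y) (psig Y y)) x
          = (\<rho> * c) * A x $ i + \<kappa> * B x $ i"
      if "x \<in> U" for x i
      using ptau_cong[OF assms(4) that e3] psig_cong[OF assms(4) that e4]
        ptau_comp[OF dD1[OF that]] psig_comp[OF dD2[OF that]]
      by (simp add: A_def B_def)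
    ultimately show ?thesis unfolding EL_ns_def by simp
  qed
  have "1 + c * c \<noteq> 0" by (metis add_pos_nonneg zero_le_square zero_less_one less_irrefl)
  have alg: "(\<rho> * c) * a + \<kappa> * b = 0 \<longleftrightarrow> (2 * c\<^sup>2 / (1 + c\<^sup>2)) * a - b = 0" for a b :: real
  proof -
    have k: "\<kappa> = - (\<rho> * (1 + c\<^sup>2) / (2 * c))"
      unfolding \<kappa>_def sn2 using cpos by (simp add: field_simps)
    have m: "(\<rho> * (1 + c\<^sup>2) / (2 * c)) * (2 * c\<^sup>2 / (1 + c\<^sup>2)) = \<rho> * c"
    proof -
      have d: "2 * c * (1 + c\<^sup>2) \<noteq> 0" using cpos \<open>1 + c * c \<noteq> 0\<close> by (simp add: power2_eq_square)
      have "(\<rho> * (1 + c\<^sup>2) / (2 * c)) * (2 * c\<^sup>2 / (1 + c\<^sup>2))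
          = (\<rho> * c * (2 * c * (1 + c\<^sup>2))) / (2 * c * (1 + c\<^sup>2))"
        unfolding times_divide_times_eq by (simp add: power2_eq_square ac_simps)
      also have "\<dots> = \<rho> * c" using d by simp
      finally show ?thesis .
    qed
    have "(\<rho> * c) * a + \<kappa> * b = (\<rho> * (1 + c\<^sup>2) / (2 * c)) * ((2 * c\<^sup>2 / (1 + c\<^sup>2)) * a - b)"
      unfolding k right_diff_distrib mult.assoc[symmetric] m by simp
    moreover have "\<rho> * (1 + c\<^sup>2) / (2 * c) \<noteq> 0" using cpos assms(1) \<open>1 + c * c \<noteq> 0\<close>
      by (simp add: power2_eq_square)
    ultimately show ?thesis by simp
  qed
  show ?thesis unfolding EL using alg ppY ssY unfolding c_def by simp
qed

end
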